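(* Let $M$ be a $3$-connected simple matroid with $r(M)\ge 4$, and let $K=x_1,\dots,x_n,y_1,\dots,y_n$ ($n\ge3$) be a carambole of $M$ with filament $L=\{y_1,\dots,y_n\}$ and hull $X=\{x_1,\dots,x_n\}$. Let $C$ be a circuit of $M$ with $C\not\subseteq L$. Then: (a) If $C$ meets $\{x_1,\dots,x_n,y_1,\dots,y_n\}$, then either (a.1) $X\subseteq C$ and $(C-L)\cup A$ is a circuit of $M$ for each $2$-element subset $A$ of $L$; or (a.2) for some $l\in\{1,\dots,n\}$, $X-C=\{x_l\}$, $(C-L)\cup y_l$ is a circuit of $M$, and $(C-L)\cup A$ is a circuit of $M$ for each $2$-element subset $A$ of $L-y_l$. (b) $C-L$ is a circuit of $M/L$.
   Context: A line of $M$ is a rank-$2$ set. For $n\ge3$, a sequence $x_1,\dots,x_n,y_1,\dots,y_n$ of elements of $M$ is a carambole of $M$ if $L:=\{y_1,\dots,y_n\}$ is a line of $M$ with $n$ distinct elements such that $\mathrm{si}(M/L)$ (the simplification) is $3$-connected, and, for each $i$, $(L-y_i)\cup x_i$ is a cocircuit of $M$. $L$ is the filament and $X:=\{x_1,\dots,x_n\}$ the hull of the carambole. *)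

theory Defs
  imports Main
begin

record 'a matroid =
  ground :: "'a set"
  indep :: "'a set \<Rightarrow> bool"

definition matroid :: "'a matroid \<Rightarrow> bool" where
  "matroid M \<longleftrightarrow>
     finite (ground M) \<and>
     indep M {} \<and>
     (\<forall>I. indep M I \<longrightarrow> I \<subseteq> ground M) \<and>
     (\<forall>I J. indep M J \<and> I \<subseteq> J \<longrightarrow> indep M I) \<and>
     (\<forall>I J. indep M I \<and> indep M J \<and> card I < card J \<longrightarrow>
        (\<exists>e \<in> J - I. indep M (insert e I)))"

definition rank :: "'a matroid \<Rightarrow> 'a set \<Rightarrow> nat" where
  "rank M X = Max (card ` {I. I \<subseteq> X \<and> indep M I})"

abbreviation matroid_rank :: "'a matroid \<Rightarrow> nat" where
  "matroid_rank M \<equiv> rank M (ground M)"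

definition basis :: "'a matroid \<Rightarrow> 'a set \<Rightarrow> bool" where
  "basis M B \<longleftrightarrow> indep M B \<and> (\<forall>I. indep M I \<and> B \<subseteq> I \<longrightarrow> I = B)"

definition circuit :: "'a matroid \<Rightarrow> 'a set \<Rightarrow> bool" where
  "circuit M C \<longleftrightarrow> C \<subseteq> ground M \<and> \<not> indep M C \<and> (\<forall>e \<in> C. indep M (C - {e}))"

definition dual :: "'a matroid \<Rightarrow> 'a matroid" where
  "dual M = \<lparr>ground = ground M,
             indep = (\<lambda>I. I \<subseteq> ground M \<and> (\<exists>B. basis M B \<and> I \<inter> B = {}))\<rparr>"

definition cocircuit :: "'a matroid \<Rightarrow> 'a set \<Rightarrow> bool" where
  "cocircuit M D \<longleftrightarrow> circuit (dual M) D"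

text \<open>Contraction M/L, via the rank function r_{M/L}(X) = r(X \<union> L) - r(L).\<close>
definition contract :: "'a matroid \<Rightarrow> 'a set \<Rightarrow> 'a matroid" where
  "contract M L = \<lparr>ground = ground M - L,
     indep = (\<lambda>I. I \<subseteq> ground M - L \<and> rank M (I \<union> L) = card I + rank M L)\<rparr>"

definition restrict :: "'a matroid \<Rightarrow> 'a set \<Rightarrow> 'a matroid" where
  "restrict M S = \<lparr>ground = S, indep = (\<lambda>I. indep M I \<and> I \<subseteq> S)\<rparr>"

definition loop :: "'a matroid \<Rightarrow> 'a \<Rightarrow> bool" where
  "loop M e \<longleftrightarrow> circuit M {e}"

definition parallel :: "'a matroid \<Rightarrow> 'a \<Rightarrow> 'a \<Rightarrow> bool" where
  "parallel M e f \<longleftrightarrow> e \<noteq> f \<and> circuit M {e, f}"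

text \<open>Simple: no loops and no parallel pairs, i.e. every circuit has at least 3 elements.\<close>
definition simple :: "'a matroid \<Rightarrow> bool" where
  "simple M \<longleftrightarrow> (\<forall>C. circuit M C \<longrightarrow> card C \<ge> 3)"

definition simplification_set :: "'a matroid \<Rightarrow> 'a set \<Rightarrow> bool" where
  "simplification_set M S \<longleftrightarrow>
     S \<subseteq> ground M \<and>
     (\<forall>e \<in> S. \<not> loop M e) \<and>
     (\<forall>e \<in> S. \<forall>f \<in> S. \<not> parallel M e f) \<and>
     (\<forall>e \<in> ground M. \<not> loop M e \<longrightarrow> e \<in> S \<or> (\<exists>f \<in> S. parallel M e f))"

definition conn :: "'a matroid \<Rightarrow> 'a set \<Rightarrow> nat" where
  "conn M X = rank M X + rank M (ground M - X) - matroid_rank M"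

definition separation :: "'a matroid \<Rightarrow> nat \<Rightarrow> 'a set \<Rightarrow> bool" where
  "separation M k X \<longleftrightarrow> X \<subseteq> ground M \<and> card X \<ge> k \<and> card (ground M - X) \<ge> k
                          \<and> conn M X < k"

definition three_connected :: "'a matroid \<Rightarrow> bool" where
  "three_connected M \<longleftrightarrow> (\<forall>k X. 1 \<le> k \<and> k < 3 \<longrightarrow> \<not> separation M k X)"

text \<open>si(N) is 3-connected (independent of the choice of simplification).\<close>
definition si_three_connected :: "'a matroid \<Rightarrow> bool" where
  "si_three_connected N \<longleftrightarrow>
     (\<exists>S. simplification_set N S \<and> three_connected (restrict N S))"

definition line :: "'a matroid \<Rightarrow> 'a set \<Rightarrow> bool" where
  "line M L \<longleftrightarrow> L \<subseteq> ground M \<and> rank M L = 2"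

definition carambole :: "'a matroid \<Rightarrow> nat \<Rightarrow> (nat \<Rightarrow> 'a) \<Rightarrow> (nat \<Rightarrow> 'a) \<Rightarrow> bool" where
  "carambole M n x y \<longleftrightarrow>
     n \<ge> 3 \<and>
     (\<forall>i \<in> {1..n}. x i \<in> ground M \<and> y i \<in> ground M) \<and>
     inj_on y {1..n} \<and>
     line M (y ` {1..n}) \<and>
     si_three_connected (contract M (y ` {1..n})) \<and>
     (\<forall>i \<in> {1..n}. cocircuit M ((y ` {1..n} - {y i}) \<union> {x i}))"

end

theory Submission
  imports Defs
begin


lemma m_finite: "matroid M \<Longrightarrow> finite (ground M)"
  by (simp add: matroid_def)
lemma m_indep_sub: "matroid M \<Longrightarrow> indep M I \<Longrightarrow> I \<subseteq> ground M"
  by (simp add: matroid_def)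
lemma m_indep_empty: "matroid M \<Longrightarrow> indep M {}"
  by (simp add: matroid_def)
lemma m_indep_mono: "matroid M \<Longrightarrow> indep M J \<Longrightarrow> I \<subseteq> J \<Longrightarrow> indep M I"
proof -
  assume "matroid M" "indep M J" "I \<subseteq> J"
  moreover have "matroid M \<Longrightarrow> (\<forall>I J. indep M J \<and> I \<subseteq> J \<longrightarrow> indep M I)" by (simp add: matroid_def)
  ultimately show ?thesis by blast
qed
lemma m_aug: "matroid M \<Longrightarrow> indep M I \<Longrightarrow> indep M J \<Longrightarrow> card I < card J \<Longrightarrow> \<exists>e\<in>J-I. indep M (insert e I)"
proof -
  assume "matroid M" "indep M I" "indep M J" "card I < card J"
  moreover have "matroid M \<Longrightarrow> (\<forall>I J. indep M I \<and> indep M J \<and> card I < card J \<longrightarrow>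
        (\<exists>e \<in> J - I. indep M (insert e I)))" by (simp add: matroid_def)
  ultimately show ?thesis by blast
qed
lemma m_indep_finite: "matroid M \<Longrightarrow> indep M I \<Longrightarrow> finite I"
  by (meson m_finite m_indep_sub finite_subset)

lemma rank_fin: "matroid M \<Longrightarrow> finite {I. I \<subseteq> X \<and> indep M I}"
proof -
  assume m: "matroid M"
  have "{I. I \<subseteq> X \<and> indep M I} \<subseteq> Pow (ground M)" using m_indep_sub[OF m] by blast
  moreover have "finite (Pow (ground M))" using m_finite[OF m] by simp
  ultimately show ?thesis by (rule finite_subset)
qed

lemma rank_ge: "matroid M \<Longrightarrow> indep M I \<Longrightarrow> I \<subseteq> X \<Longrightarrow> card I \<le> rank M X"
  unfolding rank_def
proof (rule Max_ge)
  assume m: "matroid M" and "indep M I" "I \<subseteq> X"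
  show "finite (card ` {I. I \<subseteq> X \<and> indep M I})" using rank_fin[OF m] by blast
  show "card I \<in> card ` {I. I \<subseteq> X \<and> indep M I}" using \<open>indep M I\<close> \<open>I \<subseteq> X\<close> by blast
qed

lemma rank_obtain: "matroid M \<Longrightarrow> \<exists>I. I \<subseteq> X \<and> indep M I \<and> card I = rank M X"
proof -
  assume m: "matroid M"
  have "rank M X \<in> card ` {I. I \<subseteq> X \<and> indep M I}"
    unfolding rank_def
  proof (rule Max_in)
    show "finite (card ` {I. I \<subseteq> X \<and> indep M I})" using rank_fin[OF m] by blast
    show "card ` {I. I \<subseteq> X \<and> indep M I} \<noteq> {}" using m_indep_empty[OF m] by blast
  qed
  thus ?thesis by auto
qed

lemma rank_extend:
  assumes m: "matroid M" and J: "indep M J" "J \<subseteq> X"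
  shows "\<exists>I. J \<subseteq> I \<and> I \<subseteq> X \<and> indep M I \<and> card I = rank M X"
proof -
  define S where "S = {I. J \<subseteq> I \<and> I \<subseteq> X \<and> indep M I}"
  have fS: "finite S" using rank_fin[OF m, of X] unfolding S_def by (rule rev_finite_subset) auto
  have JS: "J \<in> S" using J S_def by auto
  have "Max (card ` S) \<in> card ` S" using fS JS by (intro Max_in) auto
  then obtain I where IS: "I \<in> S" and cI: "card I = Max (card ` S)" by auto
  have mx: "\<And>I'. I' \<in> S \<Longrightarrow> card I' \<le> card I" using cI fS by auto
  have le: "card I \<le> rank M X" using IS S_def rank_ge[OF m] by auto
  show ?thesis
  proof (cases "card I = rank M X")
    case True then show ?thesis using IS S_def by auto
  next
    case False
    obtain K where K: "K \<subseteq> X" "indep M K" "card K = rank M X" using rank_obtain[OF m] by blast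
    have "card I < card K" using False le K by auto
    then obtain e where e: "e \<in> K - I" "indep M (insert e I)" using m_aug[OF m] IS S_def K by blast
    have "insert e I \<in> S" using e K IS S_def by auto
    moreover have "card (insert e I) = card I + 1"
      using e m_indep_finite[OF m] IS S_def by auto
    ultimately have "card I + 1 \<le> card I" using mx[of "insert e I"] by simp
    thus ?thesis by simp
  qed
qed

lemma rank_mono: "matroid M \<Longrightarrow> X \<subseteq> Y \<Longrightarrow> rank M X \<le> rank M Y"
proof -
  assume m: "matroid M" and XY: "X \<subseteq> Y"
  obtain I where "I \<subseteq> X" "indep M I" "card I = rank M X" using rank_obtain[OF m] by blast
  thus ?thesis using rank_ge[OF m, of I Y] XY by auto
qed

lemma rank_le_card: "matroid M \<Longrightarrow> finite X \<Longrightarrow> rank M X \<le> card X"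
proof -
  assume m: "matroid M" and f: "finite X"
  obtain I where "I \<subseteq> X" "indep M I" "card I = rank M X" using rank_obtain[OF m] by blast
  thus ?thesis using card_mono[OF f, of I] by auto
qed

lemma rank_indep: "matroid M \<Longrightarrow> indep M I \<Longrightarrow> rank M I = card I"
proof -
  assume m: "matroid M" and I: "indep M I"
  have "card I \<le> rank M I" using rank_ge[OF m I] by simp
  moreover have "rank M I \<le> card I" using rank_le_card[OF m m_indep_finite[OF m I]] .
  ultimately show ?thesis by simp
qed

lemma indep_rank: "matroid M \<Longrightarrow> finite I \<Longrightarrow> rank M I = card I \<Longrightarrow> indep M I"
proof -
  assume m: "matroid M" and f: "finite I" and r: "rank M I = card I"
  obtain J where J: "J \<subseteq> I" "indep M J" "card J = rank M I" using rank_obtain[OF m] by blast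
  have "J = I" using card_subset_eq[OF f J(1)] J r by simp
  thus ?thesis using J by simp
qed

lemma rank_submod:
  assumes m: "matroid M"
  shows "rank M (A \<union> B) + rank M (A \<inter> B) \<le> rank M A + rank M B"
proof -
  obtain I where I: "I \<subseteq> A \<inter> B" "indep M I" "card I = rank M (A \<inter> B)" using rank_obtain[OF m] by blast
  have IAB: "I \<subseteq> A \<union> B" using I(1) by blast
  obtain J where J: "I \<subseteq> J" "J \<subseteq> A \<union> B" "indep M J" "card J = rank M (A \<union> B)"
    using rank_extend[OF m I(2) IAB] by blast
  have fJ: "finite J" using m_indep_finite[OF m J(3)] .
  have a: "card (J \<inter> A) \<le> rank M A" by (rule rank_ge[OF m m_indep_mono[OF m J(3)]]) auto
  have b: "card (J \<inter> B) \<le> rank M B" by (rule rank_ge[OF m m_indep_mono[OF m J(3)]]) auto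
  have "card (J \<inter> A) + card (J \<inter> B) = card ((J \<inter> A) \<union> (J \<inter> B)) + card ((J \<inter> A) \<inter> (J \<inter> B))"
    using fJ by (intro card_Un_Int) simp_all
  moreover have "(J \<inter> A) \<union> (J \<inter> B) = J" using J(2) by auto
  moreover have "card I \<le> card ((J \<inter> A) \<inter> (J \<inter> B))" using fJ I(1) J(1) by (intro card_mono) blast+
  ultimately have "card (J \<inter> A) + card (J \<inter> B) \<ge> card J + card I" by simp
  thus ?thesis using a b I(3) J(4) by linarith
qed

lemma rank_subadd: "matroid M \<Longrightarrow> rank M (A \<union> B) \<le> rank M A + rank M B"
  using rank_submod[of M A B] by linarith

lemma circuit_props:
  assumes m: "matroid M" and c: "circuit M C"
  shows "finite C" "C \<noteq> {}" "rank M C + 1 = card C"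
proof -
  show f: "finite C" using c m_finite[OF m] unfolding circuit_def using finite_subset by blast
  show ne: "C \<noteq> {}" using c m_indep_empty[OF m] unfolding circuit_def by auto
  then obtain e where e: "e \<in> C" by auto
  have "indep M (C - {e})" using c e unfolding circuit_def by auto
  moreover have "C - {e} \<subseteq> C" by blast
  ultimately have "card (C - {e}) \<le> rank M C" by (rule rank_ge[OF m])
  hence "card C - 1 \<le> rank M C" using e f by simp
  moreover have "rank M C \<noteq> card C" using c indep_rank[OF m f] unfolding circuit_def by auto
  moreover have "rank M C \<le> card C" using rank_le_card[OF m f] .
  moreover have "card C \<ge> 1" using f ne by (simp add: Suc_leI card_gt_0_iff)
  ultimately show "rank M C + 1 = card C" by linarith
qed

lemma dep_has_circuit:
  assumes m: "matroid M"
  shows "X \<subseteq> ground M \<Longrightarrow> \<not> indep M X \<Longrightarrow> \<exists>C\<subseteq>X. circuit M C"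
proof (induction "card X" arbitrary: X rule: less_induct)
  case less
  have fX: "finite X" using less.prems m_finite[OF m] finite_subset by blast
  show ?case
  proof (cases "\<forall>e\<in>X. indep M (X - {e})")
    case True then show ?thesis using less.prems unfolding circuit_def by blast
  next
    case False
    then obtain e where e: "e \<in> X" "\<not> indep M (X - {e})" by blast
    have "card (X - {e}) < card X" using e fX by (meson card_Diff1_less)
    then obtain C where "C \<subseteq> X - {e}" "circuit M C" using less.hyps[of "X - {e}"] less.prems e by blast
    thus ?thesis by blast
  qed
qed

lemma simple_small_indep:
  assumes m: "matroid M" and s: "simple M" and X: "X \<subseteq> ground M" "card X \<le> 2"
  shows "indep M X"
proof (rule ccontr)
  assume "\<not> indep M X"
  then obtain C where C: "C \<subseteq> X" "circuit M C" using dep_has_circuit[OF m X(1)] by blast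
  have "finite X" using X m_finite[OF m] finite_subset by blast
  hence "card C \<le> card X" using C(1) by (rule card_mono)
  hence "card C \<le> 2" using X(2) by linarith
  moreover have "card C \<ge> 3" using s C(2) unfolding simple_def by blast
  ultimately show False by linarith
qed

lemma basis_of_card:
  assumes m: "matroid M" and B: "indep M B" "card B = rank M (ground M)"
  shows "basis M B"
  unfolding basis_def
proof (intro conjI allI impI)
  show "indep M B" by (rule B(1))
next
  fix I assume I: "indep M I \<and> B \<subseteq> I"
  have Ig: "I \<subseteq> ground M" using m_indep_sub[OF m] I by blast
  have c: "card I \<le> card B" using rank_ge[OF m, of I "ground M"] I Ig B(2) by simp
  have f: "finite I" using I m_indep_finite[OF m] by blast
  have s: "B \<subseteq> I" using I by simp
  have "B = I" using card_seteq[OF f s c] .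
  thus "I = B" by simp
qed

lemma basis_card:
  assumes m: "matroid M" and B: "basis M B"
  shows "card B = rank M (ground M)"
proof -
  have Bi: "indep M B" using B basis_def by auto
  obtain I where I: "B \<subseteq> I" "I \<subseteq> ground M" "indep M I" "card I = rank M (ground M)"
    using rank_extend[OF m Bi m_indep_sub[OF m Bi]] by blast
  have "I = B" using B I unfolding basis_def by auto
  thus ?thesis using I by simp
qed

lemma basis_exists: "matroid M \<Longrightarrow> \<exists>B. basis M B"
proof -
  assume m: "matroid M"
  obtain I where "I \<subseteq> ground M" "indep M I" "card I = rank M (ground M)" using rank_obtain[OF m] by blast
  thus ?thesis using basis_of_card[OF m] by blast
qed

lemma cocirc_sub: "cocircuit M D \<Longrightarrow> D \<subseteq> ground M"
  unfolding cocircuit_def circuit_def dual_def by simp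

lemma cocirc_meets: "cocircuit M D \<Longrightarrow> basis M B \<Longrightarrow> D \<inter> B \<noteq> {}"
  unfolding cocircuit_def circuit_def dual_def by auto

lemma cocirc_avoid: "cocircuit M D \<Longrightarrow> f \<in> D \<Longrightarrow> \<exists>B. basis M B \<and> (D - {f}) \<inter> B = {}"
  unfolding cocircuit_def circuit_def dual_def by auto

lemma cocirc_ne: "matroid M \<Longrightarrow> cocircuit M D \<Longrightarrow> D \<noteq> {}"
  using basis_exists cocirc_meets by blast

lemma cocirc_rank:
  assumes m: "matroid M" and d: "cocircuit M D"
  shows "rank M (ground M - D) < rank M (ground M)"
proof (rule ccontr)
  assume "\<not> ?thesis"
  hence eq: "rank M (ground M - D) = rank M (ground M)" using rank_mono[OF m, of "ground M - D" "ground M"] by auto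
  obtain I where I: "I \<subseteq> ground M - D" "indep M I" "card I = rank M (ground M - D)" using rank_obtain[OF m] by blast
  have "basis M I" using basis_of_card[OF m I(2)] I(3) eq by simp
  thus False using cocirc_meets[OF d] I(1) by blast
qed

lemma orth:
  assumes m: "matroid M" and c: "circuit M C" and d: "cocircuit M D"
  shows "card (C \<inter> D) \<noteq> 1"
proof
  assume "card (C \<inter> D) = 1"
  then obtain e where ce: "C \<inter> D = {e}" by (auto simp: card_1_singleton_iff)
  obtain B where B: "basis M B" "(D - {e}) \<inter> B = {}" using cocirc_avoid[OF d] ce by blast
  define T where "T = ground M - D"
  have "B \<subseteq> insert e T" using B m_indep_sub[OF m] unfolding basis_def T_def by blast
  hence r1: "rank M (ground M) \<le> rank M (insert e T)"
    using rank_ge[OF m, of B "insert e T"] B(1) basis_card[OF m B(1)] unfolding basis_def by auto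
  have Ce: "indep M (C - {e})" "C - {e} \<subseteq> T"
    using c ce unfolding circuit_def T_def by auto
  obtain I where I: "C - {e} \<subseteq> I" "I \<subseteq> T" "indep M I" "card I = rank M T"
    using rank_extend[OF m Ce] by blast
  have r2: "rank M T < rank M (ground M)" using cocirc_rank[OF m d] T_def by simp
  obtain K where K: "K \<subseteq> insert e T" "indep M K" "card K = rank M (insert e T)" using rank_obtain[OF m] by blast
  have "card I < card K" using I K r1 r2 by linarith
  then obtain f where f: "f \<in> K - I" "indep M (insert f I)" using m_aug[OF m I(3) K(2)] by blast
  show False
  proof (cases "f \<in> T")
    case True
    have "card (insert f I) \<le> rank M T" using rank_ge[OF m f(2)] I True by auto
    moreover have "card (insert f I) = card I + 1" using f m_indep_finite[OF m I(3)] by auto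
    ultimately show False using I by linarith
  next
    case False
    hence "f = e" using f K by auto
    hence "C \<subseteq> insert f I" using I by auto
    hence "indep M C" using m_indep_mono[OF m f(2)] by blast
    thus False using c unfolding circuit_def by auto
  qed
qed



theorem proposition4p2:
  fixes M :: "'a matroid" and n :: nat and x y :: "nat \<Rightarrow> 'a" and C :: "'a set"
  assumes "matroid M"
    and "three_connected M"
    and "simple M"
    and "matroid_rank M \<ge> 4"
    and "carambole M n x y"
    and "circuit M C"
    and "\<not> C \<subseteq> y ` {1..n}"
  shows "(C \<inter> (x ` {1..n} \<union> y ` {1..n}) \<noteq> {} \<longrightarrow>
           ((x ` {1..n} \<subseteq> C \<and>
              (\<forall>A. A \<subseteq> y ` {1..n} \<and> card A = 2 \<longrightarrow>
                   circuit M ((C - y ` {1..n}) \<union> A)))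
            \<or>
            (\<exists>l \<in> {1..n}. x ` {1..n} - C = {x l} \<and>
                circuit M ((C - y ` {1..n}) \<union> {y l}) \<and>
                (\<forall>A. A \<subseteq> y ` {1..n} - {y l} \<and> card A = 2 \<longrightarrow>
                   circuit M ((C - y ` {1..n}) \<union> A)))))
         \<and> circuit (contract M (y ` {1..n})) (C - y ` {1..n})"
proof -
  note m = assms(1)
  define L where "L = y ` {1..n}"
  define X where "X = x ` {1..n}"
  define E where "E = ground M"
  define C' where "C' = C - L"
  have n3: "n \<ge> 3" using assms(5) unfolding carambole_def by blast
  have inj: "inj_on y {1..n}" using assms(5) unfolding carambole_def by blast
  have lineL: "line M L" using assms(5) unfolding carambole_def L_def by blast
  have cocs: "\<And>i. i \<in> {1..n} \<Longrightarrow> cocircuit M ((L - {y i}) \<union> {x i})"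
    using assms(5) unfolding carambole_def L_def by blast
  have LE: "L \<subseteq> E" and rL: "rank M L = 2" using lineL unfolding line_def E_def by auto
  have fE: "finite E" using m_finite[OF m] E_def by simp
  have CE: "C \<subseteq> E" using assms(6) unfolding circuit_def E_def by blast
  have fC: "finite C" using circuit_props(1)[OF m assms(6)] .
  have rE: "rank M E \<ge> 4" using assms(4) E_def by simp
  have yinj: "\<And>i j. i \<in> {1..n} \<Longrightarrow> j \<in> {1..n} \<Longrightarrow> y i = y j \<longleftrightarrow> i = j"
    using inj inj_on_eq_iff by metis
  have Lidx: "\<And>s. s \<in> L \<Longrightarrow> \<exists>i\<in>{1..n}. s = y i" unfolding L_def by blast
  have yL: "\<And>i. i \<in> {1..n} \<Longrightarrow> y i \<in> L" unfolding L_def by blast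

  have small: "\<And>S. S \<subseteq> E \<Longrightarrow> card S \<le> 2 \<Longrightarrow> indep M S"
    using simple_small_indep[OF m assms(3)] E_def by blast

  have xnL: "\<And>i. i \<in> {1..n} \<Longrightarrow> x i \<notin> L"
  proof
    fix i assume i: "i \<in> {1..n}" and xi: "x i \<in> L"
    define D where "D = (L - {y i}) \<union> {x i}"
    have cD: "cocircuit M D" using cocs[OF i] D_def by simp
    have DL: "D \<subseteq> L" using xi D_def by blast
    have DE: "D \<subseteq> E" using DL LE by blast
    have fD: "finite D" using rev_finite_subset[OF fE DE] .
    have Dne: "D \<noteq> {}" using cocirc_ne[OF m cD] .
    have rD2: "rank M D \<le> 2" using rank_mono[OF m DL] rL by simp
    have rDc: "rank M D \<le> card D" using rank_le_card[OF m fD] .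
    have rc: "rank M (E - D) < rank M E" using cocirc_rank[OF m cD] E_def by simp
    have un: "D \<union> (E - D) = E" using DE by blast
    have sub: "rank M E \<le> rank M D + rank M (E - D)" using rank_subadd[OF m, of D "E - D"] un by simp
    have fED: "finite (E - D)" using fE by simp
    have cED: "rank M (E - D) \<le> card (E - D)" using rank_le_card[OF m fED] .
    have c2: "card (E - D) \<ge> 2" using sub rD2 rE cED by linarith
    have cD1: "card D \<ge> 1" using fD Dne by (simp add: Suc_leI card_gt_0_iff)
    have tc: "\<And>k. 1 \<le> k \<Longrightarrow> k < 3 \<Longrightarrow> \<not> separation M k D"
      using assms(2) unfolding three_connected_def by blast
    have connD: "conn M D = rank M D + rank M (E - D) - rank M E" unfolding conn_def E_def by simp
    show False
    proof (cases "card D = 1")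
      case True
      have "conn M D < 1" using connD rc rDc True by linarith
      hence "separation M 1 D" unfolding separation_def using DE E_def True c2 by simp
      thus False using tc[of 1] by simp
    next
      case False
      have "conn M D < 2" using connD rc rD2 by linarith
      hence "separation M 2 D" unfolding separation_def using DE E_def False cD1 c2 by simp
      thus False using tc[of 2] by simp
    qed
  qed

  have O1: "\<And>i Z. i \<in> {1..n} \<Longrightarrow> circuit M Z \<Longrightarrow> x i \<notin> Z \<Longrightarrow> card (Z \<inter> (L - {y i})) \<noteq> 1"
  proof -
    fix i Z assume i: "i \<in> {1..n}" and Z: "circuit M Z" and xi: "x i \<notin> Z"
    have "Z \<inter> ((L - {y i}) \<union> {x i}) = Z \<inter> (L - {y i})" using xi by auto
    thus "card (Z \<inter> (L - {y i})) \<noteq> 1" using orth[OF m Z cocs[OF i]] by simp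
  qed
  have O2: "\<And>i Z. i \<in> {1..n} \<Longrightarrow> circuit M Z \<Longrightarrow> Z \<inter> (L - {y i}) = {} \<Longrightarrow> x i \<notin> Z"
  proof
    fix i Z assume i: "i \<in> {1..n}" and Z: "circuit M Z" and e: "Z \<inter> (L - {y i}) = {}" and xi: "x i \<in> Z"
    have "Z \<inter> ((L - {y i}) \<union> {x i}) = {x i}" using xi e by auto
    thus False using orth[OF m Z cocs[OF i]] by simp
  qed
  have A0: "\<And>Z i. circuit M Z \<Longrightarrow> Z \<inter> L = {} \<Longrightarrow> i \<in> {1..n} \<Longrightarrow> x i \<notin> Z"
  proof -
    fix Z i assume Z: "circuit M Z" and e: "Z \<inter> L = {}" and i: "i \<in> {1..n}"
    have "Z \<inter> (L - {y i}) = {}" using e by auto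
    thus "x i \<notin> Z" using O2[OF i Z] by blast
  qed
  have A1: "\<And>Z l i. circuit M Z \<Longrightarrow> l \<in> {1..n} \<Longrightarrow> Z \<inter> L = {y l} \<Longrightarrow> i \<in> {1..n} \<Longrightarrow> i \<noteq> l \<Longrightarrow> x i \<in> Z"
  proof (rule ccontr)
    fix Z l i assume Z: "circuit M Z" and l: "l \<in> {1..n}" and e: "Z \<inter> L = {y l}" and i: "i \<in> {1..n}"
      and il: "i \<noteq> l" and xi: "x i \<notin> Z"
    have "y l \<noteq> y i" using yinj[OF l i] il by simp
    hence "Z \<inter> (L - {y i}) = {y l}" using e by auto
    thus False using O1[OF i Z xi] by simp
  qed
  have A1': "\<And>Z l. circuit M Z \<Longrightarrow> l \<in> {1..n} \<Longrightarrow> Z \<inter> L = {y l} \<Longrightarrow> x l \<notin> Z"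
  proof -
    fix Z l assume Z: "circuit M Z" and l: "l \<in> {1..n}" and e: "Z \<inter> L = {y l}"
    have "Z \<inter> (L - {y l}) = {}" using e by auto
    thus "x l \<notin> Z" using O2[OF l Z] by blast
  qed

  define S where "S = C \<inter> L"
  have C'L: "C' \<inter> L = {}" unfolding C'_def by auto
  have C'E: "C' \<subseteq> E" using CE C'_def by blast
  have fC': "finite C'" using fC C'_def by simp
  have SE: "S \<subseteq> E" using CE S_def by blast
  have fS: "finite S" using fC S_def by simp
  have CS: "C = C' \<union> S" unfolding C'_def S_def by blast
  have cardC: "card C = card C' + card S"
    using CS card_Un_disjoint[OF fC' fS] C'L S_def by fastforce
  have CL: "C \<union> L = C' \<union> L" unfolding C'_def by blast
  have S2: "card S \<le> 2"
  proof (rule ccontr)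
    assume "\<not> card S \<le> 2"
    hence "3 \<le> card S" by simp
    then obtain T where T: "T \<subseteq> S" "card T = 3" "finite T" by (rule obtain_subset_with_card_n)
    have "rank M T \<le> rank M L" using T(1) S_def by (intro rank_mono[OF m]) blast
    hence "\<not> indep M T" using rL T(2) rank_indep[OF m, of T] by auto
    moreover obtain e where e: "e \<in> C" "e \<notin> L" using assms(7) L_def by blast
    moreover have "T \<subseteq> C - {e}" using T(1) S_def e by blast
    moreover have "indep M (C - {e})" using assms(6) e unfolding circuit_def by blast
    ultimately show False using m_indep_mono[OF m] by blast
  qed
  have rS: "rank M S = card S" using rank_indep[OF m small[OF SE S2]] .
  have rC: "rank M C + 1 = card C" using circuit_props(3)[OF m assms(6)] .

  have b1: "rank M (C' \<union> L) \<le> card C' + 1"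
  proof -
    have "rank M (C \<union> L) + rank M (C \<inter> L) \<le> rank M C + rank M L" by (rule rank_submod[OF m])
    thus ?thesis using rS S_def rC cardC rL CL by simp
  qed
  have b2: "\<And>e. e \<in> C' \<Longrightarrow> rank M ((C' - {e}) \<union> L) = card (C' - {e}) + 2"
  proof -
    fix e assume eC': "e \<in> C'"
    define J where "J = C' - {e}"
    have fJ: "finite J" using fC' J_def by simp
    have JL: "J \<inter> L = {}" using C'L J_def by auto
    have JE: "J \<subseteq> E" using C'E J_def by blast
    have eC: "e \<in> C" "e \<notin> L" using eC' C'_def by auto
    have JC: "J \<subseteq> C - {e}" unfolding J_def C'_def by auto
    have indCe: "indep M (C - {e})" using assms(6) eC unfolding circuit_def by blast
    have notCe: "\<And>Z. circuit M Z \<Longrightarrow> Z \<subseteq> C - {e} \<Longrightarrow> False"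
      using indCe m_indep_mono[OF m] unfolding circuit_def by blast
    have up: "rank M (J \<union> L) \<le> card J + 2"
      using rank_subadd[OF m, of J L] rank_le_card[OF m fJ] rL by linarith
    have "\<not> rank M (J \<union> L) < card J + 2"
    proof
      assume lt: "rank M (J \<union> L) < card J + 2"
      have dep: "\<And>p q. p \<in> L \<Longrightarrow> q \<in> L \<Longrightarrow> p \<noteq> q \<Longrightarrow> \<not> indep M (J \<union> {p, q})"
      proof
        fix p q assume p: "p \<in> L" and q: "q \<in> L" and pq: "p \<noteq> q" and ind: "indep M (J \<union> {p, q})"
        have "p \<notin> J" "q \<notin> J" using JL p q by auto
        hence cc: "card (J \<union> {p, q}) = card J + 2" using fJ pq by simp
        have "rank M (J \<union> {p, q}) \<le> rank M (J \<union> L)" using p q by (intro rank_mono[OF m]) blast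
        thus False using rank_indep[OF m ind] cc lt by linarith
      qed
      have dc: "\<And>p q. p \<in> L \<Longrightarrow> q \<in> L \<Longrightarrow> p \<noteq> q \<Longrightarrow> \<exists>Z. Z \<subseteq> J \<union> {p, q} \<and> circuit M Z"
      proof -
        fix p q assume p: "p \<in> L" and q: "q \<in> L" and pq: "p \<noteq> q"
        have "J \<union> {p, q} \<subseteq> ground M" using JE LE p q E_def by blast
        thus "\<exists>Z. Z \<subseteq> J \<union> {p, q} \<and> circuit M Z" using dep_has_circuit[OF m] dep[OF p q pq] by blast
      qed
      have "card S = 0 \<or> card S = 1 \<or> card S = 2" using S2 by linarith
      moreover
      { assume "card S = 0"
        hence S0: "C \<inter> L = {}" using fS S_def by simp
        have i12: "(1::nat) \<in> {1..n}" "(2::nat) \<in> {1..n}" using n3 by auto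
        have y12: "y 1 \<noteq> y 2" using yinj[OF i12] by simp
        obtain Z where Z: "Z \<subseteq> J \<union> {y 1, y 2}" "circuit M Z" using dc[OF yL[OF i12(1)] yL[OF i12(2)] y12] by blast
        have x1: "x 1 \<notin> Z" using A0[OF assms(6) S0 i12(1)] xnL[OF i12(1)] Z(1) JC yL[OF i12(1)] yL[OF i12(2)] by auto
        have x2: "x 2 \<notin> Z" using A0[OF assms(6) S0 i12(2)] xnL[OF i12(2)] Z(1) JC yL[OF i12(1)] yL[OF i12(2)] by auto
        have "y 2 \<notin> Z"
        proof
          assume "y 2 \<in> Z"
          hence "Z \<inter> (L - {y 1}) = {y 2}" using Z(1) JL y12 yL[OF i12(2)] by auto
          thus False using O1[OF i12(1) Z(2) x1] by simp
        qed
        moreover have "y 1 \<notin> Z"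
        proof
          assume "y 1 \<in> Z"
          hence "Z \<inter> (L - {y 2}) = {y 1}" using Z(1) JL y12 yL[OF i12(1)] by auto
          thus False using O1[OF i12(2) Z(2) x2] by simp
        qed
        ultimately have "Z \<subseteq> C - {e}" using Z(1) JC by auto
        hence False using notCe Z(2) by blast }
      moreover
      { assume "card S = 1"
        then obtain s where s: "S = {s}" by (auto simp: card_1_singleton_iff)
        then obtain l where l: "l \<in> {1..n}" "s = y l" using Lidx S_def by blast
        define k where "k = (if l = 1 then 2 else (1::nat))"
        have k: "k \<in> {1..n}" "k \<noteq> l" using n3 l k_def by auto
        have ykl: "y k \<noteq> y l" using yinj[OF k(1) l(1)] k(2) by simp
        have CLs: "C \<inter> L = {y l}" using s l S_def by simp
        obtain Z where Z: "Z \<subseteq> J \<union> {y l, y k}" "circuit M Z" using dc[OF yL[OF l(1)] yL[OF k(1)] ykl[symmetric]] by blast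
        have xl: "x l \<notin> Z" using A1'[OF assms(6) l(1) CLs] xnL[OF l(1)] Z(1) JC yL[OF l(1)] yL[OF k(1)] by auto
        have "y k \<notin> Z"
        proof
          assume "y k \<in> Z"
          hence "Z \<inter> (L - {y l}) = {y k}" using Z(1) JL ykl yL[OF k(1)] by auto
          thus False using O1[OF l(1) Z(2) xl] by simp
        qed
        moreover have "y l \<in> C - {e}" using CLs eC by auto
        ultimately have "Z \<subseteq> C - {e}" using Z(1) JC by auto
        hence False using notCe Z(2) by blast }
      moreover
      { assume "card S = 2"
        have "J \<union> S \<subseteq> C - {e}" using JC S_def eC by auto
        hence ind: "indep M (J \<union> S)" by (rule m_indep_mono[OF m indCe])
        have "J \<inter> S = {}" using JL S_def by auto
        hence cc: "card (J \<union> S) = card J + 2" using fJ fS \<open>card S = 2\<close> by (simp add: card_Un_disjoint)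
        have "rank M (J \<union> S) \<le> rank M (J \<union> L)" using S_def by (intro rank_mono[OF m]) blast
        hence False using rank_indep[OF m ind] cc lt by linarith }
      ultimately show False by blast
    qed
    hence "rank M (J \<union> L) = card J + 2" using up by linarith
    thus "rank M ((C' - {e}) \<union> L) = card (C' - {e}) + 2" unfolding J_def .
  qed

  have g1: "C' \<subseteq> ground M - L" using C'E C'L E_def by auto
  have g2: "rank M (C' \<union> L) \<noteq> card C' + rank M L" using b1 rL by simp
  have g3: "\<forall>e\<in>C'. C' - {e} \<subseteq> ground M - L \<and> rank M ((C' - {e}) \<union> L) = card (C' - {e}) + rank M L"
    using b2 rL g1 by auto
  have partb: "circuit (contract M L) C'"
    unfolding circuit_def contract_def using g1 g2 g3 by simp

  have parta: "C \<inter> (X \<union> L) \<noteq> {} \<longrightarrow>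
           ((X \<subseteq> C \<and> (\<forall>A. A \<subseteq> L \<and> card A = 2 \<longrightarrow> circuit M (C' \<union> A)))
            \<or> (\<exists>l \<in> {1..n}. X - C = {x l} \<and> circuit M (C' \<union> {y l}) \<and>
                (\<forall>A. A \<subseteq> L - {y l} \<and> card A = 2 \<longrightarrow> circuit M (C' \<union> A))))"
  proof
    assume meet: "C \<inter> (X \<union> L) \<noteq> {}"
    have Sne: "S \<noteq> {}"
    proof
      assume "S = {}"
      hence S0: "C \<inter> L = {}" using S_def by simp
      have "C \<inter> X = {}" using A0[OF assms(6) S0] unfolding X_def by auto
      thus False using meet S0 by auto
    qed
    then obtain s where s: "s \<in> S" by blast
    have "C' \<subseteq> C - {s}" using s S_def C'_def by auto
    moreover have "indep M (C - {s})" using assms(6) s S_def unfolding circuit_def by auto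
    ultimately have indC': "indep M C'" by (rule m_indep_mono[OF m, rotated])
    have K: "\<And>p q. p \<in> L \<Longrightarrow> q \<in> L \<Longrightarrow> p \<noteq> q \<Longrightarrow>
       circuit M (C' \<union> {p, q}) \<or> circuit M (C' \<union> {p}) \<or> circuit M (C' \<union> {q})"
    proof -
      fix p q assume p: "p \<in> L" and q: "q \<in> L" and pq: "p \<noteq> q"
      define W where "W = C' \<union> {p, q}"
      have pqC': "p \<notin> C'" "q \<notin> C'" using C'L p q by auto
      have cW: "card W = card C' + 2" unfolding W_def using fC' pqC' pq by simp
      have "rank M W \<le> rank M (C' \<union> L)" unfolding W_def using p q by (intro rank_mono[OF m]) auto
      hence nW: "\<not> indep M W" using b1 cW rank_indep[OF m, of W] by auto
      have WE: "W \<subseteq> ground M" unfolding W_def using C'E LE p q E_def by auto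
      obtain Z where Z: "Z \<subseteq> W" "circuit M Z" using dep_has_circuit[OF m WE nW] by blast
      have pq2: "rank M {p, q} = 2"
      proof -
        have "{p, q} \<subseteq> E" using p q LE by auto
        moreover have "card {p, q} \<le> 2" using pq by simp
        ultimately have "indep M {p, q}" by (rule small)
        thus ?thesis using rank_indep[OF m] pq by simp
      qed
      have C'Z: "C' \<subseteq> Z"
      proof
        fix e assume eC': "e \<in> C'"
        show "e \<in> Z"
        proof (rule ccontr)
          assume eZ: "e \<notin> Z"
          define V where "V = (C' - {e}) \<union> {p, q}"
          have ZV: "Z \<subseteq> V" using Z(1) eZ unfolding V_def W_def by auto
          have fV: "finite V" unfolding V_def using fC' by simp
          have cV: "card V = card (C' - {e}) + 2" unfolding V_def using fC' pqC' pq by simp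
          have VL: "V \<union> L = (C' - {e}) \<union> L" "V \<inter> L = {p, q}"
            unfolding V_def using p q C'L by auto
          have "rank M (V \<union> L) + rank M (V \<inter> L) \<le> rank M V + rank M L" by (rule rank_submod[OF m])
          hence "rank M V \<ge> card V" using VL b2[OF eC'] pq2 rL cV by simp
          moreover have "rank M V \<le> card V" using rank_le_card[OF m fV] .
          ultimately have "indep M V" using indep_rank[OF m fV] by simp
          hence "indep M Z" using ZV m_indep_mono[OF m] by blast
          thus False using Z(2) unfolding circuit_def by simp
        qed
      qed
      have "Z \<inter> {p, q} \<noteq> {}"
      proof
        assume "Z \<inter> {p, q} = {}"
        hence "Z \<subseteq> C'" using Z(1) unfolding W_def by auto
        hence "indep M Z" using indC' m_indep_mono[OF m] by blast
        thus False using Z(2) unfolding circuit_def by simp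
      qed
      moreover have "Z = C' \<union> (Z \<inter> {p, q})" using Z(1) C'Z unfolding W_def by auto
      ultimately show "circuit M (C' \<union> {p, q}) \<or> circuit M (C' \<union> {p}) \<or> circuit M (C' \<union> {q})"
        using Z(2) by (cases "p \<in> Z"; cases "q \<in> Z") auto
    qed
    have G: "\<And>l T. l \<in> {1..n} \<Longrightarrow> x l \<notin> C \<Longrightarrow> T \<subseteq> L \<Longrightarrow> circuit M (C' \<union> T) \<Longrightarrow> card (T - {y l}) \<noteq> 1"
    proof -
      fix l T assume l: "l \<in> {1..n}" and xl: "x l \<notin> C" and T: "T \<subseteq> L" and c: "circuit M (C' \<union> T)"
      have "(C' \<union> T) \<inter> (L - {y l}) = T - {y l}" using T C'L by auto
      moreover have "x l \<notin> C' \<union> T" using xl xnL[OF l] T C'_def by auto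
      ultimately show "card (T - {y l}) \<noteq> 1" using O1[OF l c] by simp
    qed
    have A2: "\<And>A. A \<subseteq> L \<Longrightarrow> card A = 2 \<Longrightarrow> \<exists>p q. A = {p, q} \<and> p \<noteq> q \<and> p \<in> L \<and> q \<in> L"
    proof -
      fix A assume "A \<subseteq> L" "card A = 2"
      then obtain p q where "A = {p, q}" "p \<noteq> q" by (auto simp: card_2_iff)
      thus "\<exists>p q. A = {p, q} \<and> p \<noteq> q \<and> p \<in> L \<and> q \<in> L" using \<open>A \<subseteq> L\<close> by auto
    qed
    show "(X \<subseteq> C \<and> (\<forall>A. A \<subseteq> L \<and> card A = 2 \<longrightarrow> circuit M (C' \<union> A)))
            \<or> (\<exists>l \<in> {1..n}. X - C = {x l} \<and> circuit M (C' \<union> {y l}) \<and>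
                (\<forall>A. A \<subseteq> L - {y l} \<and> card A = 2 \<longrightarrow> circuit M (C' \<union> A)))"
    proof (cases "\<forall>i\<in>{1..n}. x i \<in> C")
      case True
      have single: "\<And>p. p \<in> L \<Longrightarrow> \<not> circuit M (C' \<union> {p})"
      proof
        fix p assume p: "p \<in> L" and c: "circuit M (C' \<union> {p})"
        obtain mm where mm: "mm \<in> {1..n}" "p = y mm" using Lidx[OF p] by blast
        have "(C' \<union> {p}) \<inter> L = {y mm}" using C'L p mm by auto
        hence "x mm \<notin> C' \<union> {p}" using A1'[OF c mm(1)] by simp
        moreover have "x mm \<in> C'" using True mm(1) xnL[OF mm(1)] C'_def by auto
        ultimately show False by simp
      qed
      have "X \<subseteq> C" using True X_def by auto
      moreover have "\<forall>A. A \<subseteq> L \<and> card A = 2 \<longrightarrow> circuit M (C' \<union> A)"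
      proof (intro allI impI)
        fix A assume A: "A \<subseteq> L \<and> card A = 2"
        then obtain p q where pq: "A = {p, q}" "p \<noteq> q" "p \<in> L" "q \<in> L" using A2 by blast
        show "circuit M (C' \<union> A)" using K[OF pq(3) pq(4) pq(2)] single[OF pq(3)] single[OF pq(4)] pq(1) by blast
      qed
      ultimately show ?thesis by blast
    next
      case False
      then obtain l where l: "l \<in> {1..n}" "x l \<notin> C" by blast
      define k where "k = (if l = 1 then 2 else (1::nat))"
      have k: "k \<in> {1..n}" "k \<noteq> l" using n3 l k_def by auto
      have ykl: "y k \<noteq> y l" using yinj[OF k(1) l(1)] k(2) by simp
      have GL: "\<And>T. T \<subseteq> L \<Longrightarrow> circuit M (C' \<union> T) \<Longrightarrow> card (T - {y l}) \<noteq> 1" using G[OF l] by blast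
      have n1: "\<not> circuit M (C' \<union> {y l, y k})"
      proof
        assume "circuit M (C' \<union> {y l, y k})"
        moreover have "{y l, y k} - {y l} = {y k}" using ykl by auto
        ultimately show False using GL[of "{y l, y k}"] yL[OF l(1)] yL[OF k(1)] by auto
      qed
      have n2: "\<not> circuit M (C' \<union> {y k})"
      proof
        assume "circuit M (C' \<union> {y k})"
        moreover have "{y k} - {y l} = {y k}" using ykl by auto
        ultimately show False using GL[of "{y k}"] yL[OF k(1)] by auto
      qed
      have cl: "circuit M (C' \<union> {y l})"
        using K[OF yL[OF l(1)] yL[OF k(1)] ykl[symmetric]] n1 n2 by blast
      have Zl: "(C' \<union> {y l}) \<inter> L = {y l}" using C'L yL[OF l(1)] by auto
      have XC: "X - C = {x l}"
      proof
        show "{x l} \<subseteq> X - C" using l X_def by auto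
        show "X - C \<subseteq> {x l}"
        proof
          fix z assume z: "z \<in> X - C"
          then obtain i where i: "i \<in> {1..n}" "z = x i" using X_def by auto
          show "z \<in> {x l}"
          proof (cases "i = l")
            case True thus ?thesis using i by simp
          next
            case False
            have "x i \<in> C' \<union> {y l}" using A1[OF cl l(1) Zl i(1) False] .
            hence "x i \<in> C" using xnL[OF i(1)] yL[OF l(1)] C'_def by auto
            thus ?thesis using z i by simp
          qed
        qed
      qed
      have "\<forall>A. A \<subseteq> L - {y l} \<and> card A = 2 \<longrightarrow> circuit M (C' \<union> A)"
      proof (intro allI impI)
        fix A assume A: "A \<subseteq> L - {y l} \<and> card A = 2"
        hence AL: "A \<subseteq> L" by auto
        obtain p q where pq: "A = {p, q}" "p \<noteq> q" "p \<in> L" "q \<in> L" using A2[OF AL] A by blast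
        have pl: "p \<noteq> y l" "q \<noteq> y l" using A pq(1) by auto
        have "\<not> circuit M (C' \<union> {p})"
        proof
          assume "circuit M (C' \<union> {p})"
          moreover have "{p} - {y l} = {p}" using pl by auto
          ultimately show False using GL[of "{p}"] pq(3) by auto
        qed
        moreover have "\<not> circuit M (C' \<union> {q})"
        proof
          assume "circuit M (C' \<union> {q})"
          moreover have "{q} - {y l} = {q}" using pl by auto
          ultimately show False using GL[of "{q}"] pq(4) by auto
        qed
        ultimately show "circuit M (C' \<union> A)" using K[OF pq(3) pq(4) pq(2)] pq(1) by blast
      qed
      thus ?thesis using l XC cl by blast
    qed
  qed

  show ?thesis using parta partb unfolding L_def X_def C'_def by (intro conjI)
qed

end
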